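(* Let $\vdash\subseteq Sqt$ satisfy (A), (Mon), (Cut), (Com), ($\wedge$I), ($\wedge$E), ($\to$0), ($\to$1), ($\to$2). Let $\varphi\in Form$ and $\Gamma,\Delta\subseteq Form$ with $\Delta$ nonempty and closed under $\wedge$ (i.e. $\alpha,\beta\in\Delta\Rightarrow\alpha\wedge\beta\in\Delta$). Then $\Gamma(\Delta,\varphi)$ is $\vdash$-deduction closed, $\Delta\cup\{\varphi\}\subseteq\Gamma(\Delta,\varphi)$, and $\Gamma R_\to\Gamma(\Delta,\varphi)$. Moreover, if $\Gamma$ is $\vdash$-deduction closed, then $\Gamma(\Delta,\varphi)$ is the smallest set of formulas having these three properties (i.e. it is contained in every $\vdash$-deduction closed $\Phi$ with $\Delta\cup\{\varphi\}\subseteq\Phi$ and $\Gamma R_\to\Phi$). In particular (taking $\Delta=Thm=\{\psi:\vdash\psi\}$), for every $\Gamma$ and $\varphi$, $\Gamma(Thm,\varphi)$ is $\vdash$-deduction closed, contains $\varphi$, and $\Gamma R_\to\Gamma(Thm,\varphi)$.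
   Context: $Form$: $\varphi::=p\mid\bot\mid(\varphi\wedge\varphi)\mid(\varphi\to\varphi)$ over a countable set $P0$ ($\wedge$ left-associative, binds tighter than $\to$). Sequents are pairs $(\Gamma,\varphi)$, $\Gamma\subseteq Form$; $\Gamma\vdash\varphi$ means $(\Gamma,\varphi)\in\vdash$, $\psi\vdash\varphi$ means $\{\psi\}\vdash\varphi$, $\vdash\varphi$ means $\emptyset\vdash\varphi$. Rules (for all $\Gamma,\Delta\subseteq Form$, formulas): (A) $\Gamma\cup\{\varphi\}\vdash\varphi$; (Mon) $\Gamma\subseteq\Delta$, $\Gamma\vdash\varphi\Rightarrow\Delta\vdash\varphi$; (Cut) $\Gamma\cup\{\psi\}\vdash\varphi$, $\Delta\vdash\psi\Rightarrow\Gamma\cup\Delta\vdash\varphi$; (Com) $\Gamma\vdash\varphi\Rightarrow\Gamma'\vdash\varphi$ for some finite $\Gamma'\subseteq\Gamma$; ($\wedge$I) $\{\varphi,\psi\}\vdash\varphi\wedge\psi$; ($\wedge$E) $\varphi\wedge\psi\vdash\varphi$ and $\varphi\wedge\psi\vdash\psi$; ($\to$0) $\vdash\varphi\to\varphi$; ($\to$1) $\Gamma\vdash\varphi\Rightarrow\{\psi\to\chi:\chi\in\Gamma\}\vdash\psi\to\varphi$; ($\to$2) $\{\varphi\to\psi,\psi\to\chi\}\vdash\varphi\to\chi$. $\Gamma$ is $\vdash$-deduction closed iff $\Gamma\vdash\psi$ implies $\psi\in\Gamma$. For $\Gamma,\Delta\subseteq Form$: $\Gamma R_\to\Delta$ iff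 for all $\varphi,\psi$, $\varphi\to\psi\in\Gamma$ and $\varphi\in\Delta$ imply $\psi\in\Delta$. $\Gamma(\Delta,\varphi)=\{\psi\in Form:$ there is $\alpha\in\Delta$ with $\Gamma\vdash\alpha\wedge\varphi\to\psi\}$. *)

theory Defs
  imports "HOL-Library.Countable"
begin

datatype 'p form = Atom 'p | Bot | Conj "'p form" "'p form" | Imp "'p form" "'p form"

type_synonym 'p cons = "('p form set \<times> 'p form) set"

definition rule_A :: "'p cons \<Rightarrow> bool" where
  "rule_A D \<longleftrightarrow> (\<forall>G phi. (G \<union> {phi}, phi) \<in> D)"
definition rule_Mon :: "'p cons \<Rightarrow> bool" where
  "rule_Mon D \<longleftrightarrow> (\<forall>G H phi. G \<subseteq> H \<and> (G, phi) \<in> D \<longrightarrow> (H, phi) \<in> D)"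
definition rule_Cut :: "'p cons \<Rightarrow> bool" where
  "rule_Cut D \<longleftrightarrow> (\<forall>G H psi phi. (G \<union> {psi}, phi) \<in> D \<and> (H, psi) \<in> D \<longrightarrow> (G \<union> H, phi) \<in> D)"
definition rule_Com :: "'p cons \<Rightarrow> bool" where
  "rule_Com D \<longleftrightarrow> (\<forall>G phi. (G, phi) \<in> D \<longrightarrow> (\<exists>G'. finite G' \<and> G' \<subseteq> G \<and> (G', phi) \<in> D))"
definition rule_ConjI :: "'p cons \<Rightarrow> bool" where
  "rule_ConjI D \<longleftrightarrow> (\<forall>phi psi. ({phi, psi}, Conj phi psi) \<in> D)"
definition rule_ConjE :: "'p cons \<Rightarrow> bool" where
  "rule_ConjE D \<longleftrightarrow> (\<forall>phi psi. ({Conj phi psi}, phi) \<in> D \<and> ({Conj phi psi}, psi) \<in> D)"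
definition rule_Imp0 :: "'p cons \<Rightarrow> bool" where
  "rule_Imp0 D \<longleftrightarrow> (\<forall>phi. ({}, Imp phi phi) \<in> D)"
definition rule_Imp1 :: "'p cons \<Rightarrow> bool" where
  "rule_Imp1 D \<longleftrightarrow> (\<forall>G phi psi. (G, phi) \<in> D \<longrightarrow> ((\<lambda>chi. Imp psi chi) ` G, Imp psi phi) \<in> D)"
definition rule_Imp2 :: "'p cons \<Rightarrow> bool" where
  "rule_Imp2 D \<longleftrightarrow> (\<forall>phi psi chi. ({Imp phi psi, Imp psi chi}, Imp phi chi) \<in> D)"

definition all_rules :: "'p cons \<Rightarrow> bool" where
  "all_rules D \<longleftrightarrow> rule_A D \<and> rule_Mon D \<and> rule_Cut D \<and> rule_Com D \<and> rule_ConjI D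
     \<and> rule_ConjE D \<and> rule_Imp0 D \<and> rule_Imp1 D \<and> rule_Imp2 D"

definition ded_closed :: "'p cons \<Rightarrow> 'p form set \<Rightarrow> bool" where
  "ded_closed D G \<longleftrightarrow> (\<forall>psi. (G, psi) \<in> D \<longrightarrow> psi \<in> G)"

definition R_imp :: "'p form set \<Rightarrow> 'p form set \<Rightarrow> bool" where
  "R_imp G H \<longleftrightarrow> (\<forall>phi psi. Imp phi psi \<in> G \<and> phi \<in> H \<longrightarrow> psi \<in> H)"

text \<open>Gamma(Delta, phi) = {psi. exists alpha in Delta with Gamma |- alpha /\ phi -> psi}\<close>
definition ext :: "'p cons \<Rightarrow> 'p form set \<Rightarrow> 'p form set \<Rightarrow> 'p form \<Rightarrow> 'p form set" where
  "ext D G Del phi = {psi. \<exists>alpha\<in>Del. (G, Imp (Conj alpha phi) psi) \<in> D}"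

definition Thm :: "'p cons \<Rightarrow> 'p form set" where
  "Thm D = {psi. ({}, psi) \<in> D}"

end

theory Submission
  imports Defs
begin

lemma cutR: "all_rules D \<Longrightarrow> (G \<union> {psi}, phi) \<in> D \<Longrightarrow> (H, psi) \<in> D \<Longrightarrow> (G \<union> H, phi) \<in> D"
  unfolding all_rules_def rule_Cut_def by blast

lemma AR: "all_rules D \<Longrightarrow> (G \<union> {psi}, psi) \<in> D"
  unfolding all_rules_def rule_A_def by blast
lemma ComR: "all_rules D \<Longrightarrow> (G, phi) \<in> D \<Longrightarrow> \<exists>G'. finite G' \<and> G' \<subseteq> G \<and> (G', phi) \<in> D"
  unfolding all_rules_def rule_Com_def by blast
lemma Imp1R: "all_rules D \<Longrightarrow> (G, phi) \<in> D \<Longrightarrow> ((\<lambda>chi. Imp psi chi) ` G, Imp psi phi) \<in> D"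
  unfolding all_rules_def rule_Imp1_def by blast

lemma cut_fin:
  assumes R: "all_rules D"
  shows "finite S \<Longrightarrow> (\<forall>c\<in>S. (G,c)\<in>D) \<Longrightarrow> (H \<union> S, psi) \<in> D \<Longrightarrow> (H \<union> G, psi) \<in> D"
proof (induction S arbitrary: H rule: finite_induct)
  case empty
  then show ?case using R unfolding all_rules_def rule_Mon_def by (metis Un_empty_right Un_upper1)
next
  case (insert x S)
  have "((H \<union> S) \<union> {x}, psi) \<in> D" using insert.prems(2) by (simp add: Un_insert_right)
  moreover have "(G, x) \<in> D" using insert.prems(1) by simp
  ultimately have "((H \<union> S) \<union> G, psi) \<in> D" by (rule cutR[OF R])
  hence "((H \<union> G) \<union> S, psi) \<in> D" by (simp add: Un_ac)
  moreover have hS: "\<forall>c\<in>S. (G,c)\<in>D" using insert.prems(1) by simp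
  ultimately have "((H \<union> G) \<union> G, psi) \<in> D" using insert.IH by blast
  thus ?case by (simp add: Un_ac)
qed

lemma ded_imp:
  assumes R: "all_rules D" and h: "({X}, Y) \<in> D"
  shows "({}, Imp X Y) \<in> D"
proof -
  have "((\<lambda>chi. Imp X chi) ` {X}, Imp X Y) \<in> D" by (rule Imp1R[OF R h])
  hence "({Imp X X}, Imp X Y) \<in> D" by simp
  moreover have "({}, Imp X X) \<in> D" using R unfolding all_rules_def rule_Imp0_def by blast
  ultimately show ?thesis using cut_fin[OF R, of "{Imp X X}" "{}" "{}"] by simp
qed

lemma mon: "all_rules D \<Longrightarrow> (G,p)\<in>D \<Longrightarrow> G \<subseteq> H \<Longrightarrow> (H,p)\<in>D"
  unfolding all_rules_def rule_Mon_def by blast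

lemma trans_imp:
  assumes R: "all_rules D" and "(G, Imp A B) \<in> D" "(G, Imp B C) \<in> D"
  shows "(G, Imp A C) \<in> D"
proof -
  have "({Imp A B, Imp B C}, Imp A C) \<in> D" using R unfolding all_rules_def rule_Imp2_def by blast
  thus ?thesis using cut_fin[OF R, of "{Imp A B, Imp B C}" G "{}"] assms by simp
qed

lemma chain1:
  assumes R: "all_rules D" and "({X}, Y) \<in> D" "({Y}, Z) \<in> D"
  shows "({X}, Z) \<in> D"
  using cut_fin[OF R, of "{Y}" "{X}" "{}" Z] assms by simp

lemma conjE1: "all_rules D \<Longrightarrow> ({Conj a b}, a) \<in> D"
  unfolding all_rules_def rule_ConjE_def by blast
lemma conjE2: "all_rules D \<Longrightarrow> ({Conj a b}, b) \<in> D"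
  unfolding all_rules_def rule_ConjE_def by blast

lemma conj_pair:
  assumes R: "all_rules D" and "({X}, A) \<in> D" "({X}, B) \<in> D"
  shows "({X}, Conj A B) \<in> D"
proof -
  have "({A, B}, Conj A B) \<in> D" using R unfolding all_rules_def rule_ConjI_def by blast
  thus ?thesis using cut_fin[OF R, of "{A,B}" "{X}" "{}"] assms by simp
qed

lemma weak1:
  assumes R: "all_rules D"
  shows "({}, Imp (Conj (Conj a b) p) (Conj a p)) \<in> D"
  apply (rule ded_imp[OF R])
  apply (rule conj_pair[OF R])
   apply (rule chain1[OF R conjE1[OF R] conjE1[OF R]])
  apply (rule conjE2[OF R])
  done

lemma weak2:
  assumes R: "all_rules D"
  shows "({}, Imp (Conj (Conj a b) p) (Conj b p)) \<in> D"
  apply (rule ded_imp[OF R])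
  apply (rule conj_pair[OF R])
   apply (rule chain1[OF R conjE1[OF R] conjE2[OF R]])
  apply (rule conjE2[OF R])
  done

lemma find_alpha:
  assumes R: "all_rules D" and ne: "Del \<noteq> {}" and cl: "\<forall>a\<in>Del. \<forall>b\<in>Del. Conj a b \<in> Del"
  shows "finite S \<Longrightarrow> S \<subseteq> ext D G Del phi \<Longrightarrow> \<exists>a\<in>Del. \<forall>c\<in>S. (G, Imp (Conj a phi) c) \<in> D"
proof (induction S rule: finite_induct)
  case empty
  then show ?case using ne by auto
next
  case (insert x S)
  then obtain a where a: "a\<in>Del" "\<forall>c\<in>S. (G, Imp (Conj a phi) c) \<in> D" by auto
  from insert.prems obtain b where b: "b\<in>Del" "(G, Imp (Conj b phi) x) \<in> D" unfolding ext_def by auto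
  have w1: "(G, Imp (Conj (Conj a b) phi) (Conj a phi)) \<in> D" using mon[OF R weak1[OF R]] by blast
  have w2: "(G, Imp (Conj (Conj a b) phi) (Conj b phi)) \<in> D" using mon[OF R weak2[OF R]] by blast
  show ?case
  proof (rule bexI[of _ "Conj a b"])
    show "Conj a b \<in> Del" using cl a b by blast
    show "\<forall>c\<in>insert x S. (G, Imp (Conj (Conj a b) phi) c) \<in> D"
      using trans_imp[OF R w1] trans_imp[OF R w2] a b by auto
  qed
qed

lemma part1:
  assumes R: "all_rules D" and ne: "Del \<noteq> {}" and cl: "\<forall>a\<in>Del. \<forall>b\<in>Del. Conj a b \<in> Del"
  shows "ded_closed D (ext D G Del phi) \<and> Del \<union> {phi} \<subseteq> ext D G Del phi
            \<and> R_imp G (ext D G Del phi)"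
proof (intro conjI)
  show "ded_closed D (ext D G Del phi)"
    unfolding ded_closed_def
  proof (intro allI impI)
    fix psi assume "(ext D G Del phi, psi) \<in> D"
    then obtain E' where E': "finite E'" "E' \<subseteq> ext D G Del phi" "(E', psi) \<in> D"
      using ComR[OF R] by blast
    obtain a where a: "a\<in>Del" "\<forall>c\<in>E'. (G, Imp (Conj a phi) c) \<in> D"
      using find_alpha[OF R ne cl E'(1,2)] by blast
    have "((\<lambda>c. Imp (Conj a phi) c) ` E', Imp (Conj a phi) psi) \<in> D"
      using Imp1R[OF R E'(3)] .
    hence "({} \<union> G, Imp (Conj a phi) psi) \<in> D"
      using cut_fin[OF R, of "(\<lambda>c. Imp (Conj a phi) c) ` E'" G "{}"] E'(1) a(2) by auto
    thus "psi \<in> ext D G Del phi" using a(1) unfolding ext_def by auto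
  qed
  show "Del \<union> {phi} \<subseteq> ext D G Del phi"
  proof
    fix x assume x: "x \<in> Del \<union> {phi}"
    show "x \<in> ext D G Del phi"
    proof (cases "x \<in> Del")
      case True
      have "({}, Imp (Conj x phi) x) \<in> D" by (rule ded_imp[OF R conjE1[OF R]])
      hence "(G, Imp (Conj x phi) x) \<in> D" using mon[OF R] by blast
      thus ?thesis using True unfolding ext_def by auto
    next
      case False
      hence "x = phi" using x by auto
      obtain a where "a \<in> Del" using ne by auto
      have "({}, Imp (Conj a phi) phi) \<in> D" by (rule ded_imp[OF R conjE2[OF R]])
      hence "(G, Imp (Conj a phi) phi) \<in> D" using mon[OF R] by blast
      thus ?thesis using \<open>a\<in>Del\<close> \<open>x = phi\<close> unfolding ext_def by auto
    qed
  qed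
  show "R_imp G (ext D G Del phi)"
    unfolding R_imp_def
  proof (intro allI impI)
    fix c p assume h: "Imp c p \<in> G \<and> c \<in> ext D G Del phi"
    then obtain a where a: "a\<in>Del" "(G, Imp (Conj a phi) c) \<in> D" unfolding ext_def by auto
    have "(G \<union> {Imp c p}, Imp c p) \<in> D" by (rule AR[OF R])
    hence "(G, Imp c p) \<in> D" using h by (simp add: insert_absorb)
    hence "(G, Imp (Conj a phi) p) \<in> D" using trans_imp[OF R a(2)] by blast
    thus "p \<in> ext D G Del phi" using a(1) unfolding ext_def by auto
  qed
qed

lemma part_min:
  assumes R: "all_rules D" and G: "ded_closed D G"
    and P: "ded_closed D Phi" "Del \<union> {phi} \<subseteq> Phi" "R_imp G Phi"
  shows "ext D G Del phi \<subseteq> Phi"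
proof
  fix x assume "x \<in> ext D G Del phi"
  then obtain a where a: "a\<in>Del" "(G, Imp (Conj a phi) x) \<in> D" unfolding ext_def by auto
  have i: "Imp (Conj a phi) x \<in> G" using G a(2) unfolding ded_closed_def by blast
  have "({a, phi}, Conj a phi) \<in> D" using R unfolding all_rules_def rule_ConjI_def by blast
  hence "(Phi, Conj a phi) \<in> D" using mon[OF R] P(2) a(1) by blast
  hence "Conj a phi \<in> Phi" using P(1) unfolding ded_closed_def by blast
  thus "x \<in> Phi" using P(3) i unfolding R_imp_def by blast
qed

theorem mainTheorem9:
  fixes D :: "('p::countable) cons"
  assumes "all_rules D"
  shows "(\<forall>(G :: 'p form set) Del phi.
            Del \<noteq> {} \<and> (\<forall>a\<in>Del. \<forall>b\<in>Del. Conj a b \<in> Del) \<longrightarrow>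
              ded_closed D (ext D G Del phi)
            \<and> Del \<union> {phi} \<subseteq> ext D G Del phi
            \<and> R_imp G (ext D G Del phi)
            \<and> (ded_closed D G \<longrightarrow>
                 (\<forall>Phi. ded_closed D Phi \<and> Del \<union> {phi} \<subseteq> Phi \<and> R_imp G Phi
                        \<longrightarrow> ext D G Del phi \<subseteq> Phi)))
       \<and> (\<forall>(G :: 'p form set) phi.
              ded_closed D (ext D G (Thm D) phi)
            \<and> phi \<in> ext D G (Thm D) phi
            \<and> R_imp G (ext D G (Thm D) phi))"
proof -
  note R = assms
  have A: "\<forall>(G :: 'p form set) Del phi.
            Del \<noteq> {} \<and> (\<forall>a\<in>Del. \<forall>b\<in>Del. Conj a b \<in> Del) \<longrightarrow>
              ded_closed D (ext D G Del phi)
            \<and> Del \<union> {phi} \<subseteq> ext D G Del phi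
            \<and> R_imp G (ext D G Del phi)
            \<and> (ded_closed D G \<longrightarrow>
                 (\<forall>Phi. ded_closed D Phi \<and> Del \<union> {phi} \<subseteq> Phi \<and> R_imp G Phi
                        \<longrightarrow> ext D G Del phi \<subseteq> Phi))"
  proof (intro allI impI)
    fix G :: "'p form set" and Del :: "'p form set" and phi
    assume h: "Del \<noteq> {} \<and> (\<forall>a\<in>Del. \<forall>b\<in>Del. Conj a b \<in> Del)"
    show "ded_closed D (ext D G Del phi)
            \<and> Del \<union> {phi} \<subseteq> ext D G Del phi
            \<and> R_imp G (ext D G Del phi)
            \<and> (ded_closed D G \<longrightarrow>
                 (\<forall>Phi. ded_closed D Phi \<and> Del \<union> {phi} \<subseteq> Phi \<and> R_imp G Phi
                        \<longrightarrow> ext D G Del phi \<subseteq> Phi))"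
      using part1[OF R, of Del G phi] h part_min[OF R, of G _ Del phi] by simp
  qed
  have ne: "Thm D \<noteq> {}"
  proof -
    have "({}, Imp (Bot::'p form) Bot) \<in> D" using R unfolding all_rules_def rule_Imp0_def by blast
    thus ?thesis unfolding Thm_def by auto
  qed
  have cl: "\<forall>a\<in>Thm D. \<forall>b\<in>Thm D. Conj a b \<in> Thm D"
  proof (intro ballI)
    fix a b assume "a \<in> Thm D" "b \<in> Thm D"
    hence ab: "({}, a) \<in> D" "({}, b) \<in> D" unfolding Thm_def by auto
    have "({a, b}, Conj a b) \<in> D" using R unfolding all_rules_def rule_ConjI_def by blast
    hence "({} \<union> {}, Conj a b) \<in> D" using cut_fin[OF R, of "{a,b}" "{}" "{}"] ab by simp
    thus "Conj a b \<in> Thm D" unfolding Thm_def by simp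
  qed
  have B: "\<forall>(G :: 'p form set) phi.
              ded_closed D (ext D G (Thm D) phi)
            \<and> phi \<in> ext D G (Thm D) phi
            \<and> R_imp G (ext D G (Thm D) phi)"
  proof (intro allI)
    fix G :: "'p form set" and phi
    show "ded_closed D (ext D G (Thm D) phi)
            \<and> phi \<in> ext D G (Thm D) phi
            \<and> R_imp G (ext D G (Thm D) phi)"
      using part1[OF R ne cl, of G phi] by simp
  qed
  show ?thesis using A B by (rule conjI)
qed

end
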